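(* Let $B_1\in\mathbf B$ and $B_2\in\mathrm{Mat}_{2,3}(\mathbb R)$ with $B_2\notin B_1\mathbb R$. Then $\mu\{x: p_{B_1,B_2}(x)\ne0\}>0$.
   Context: $\mathbf A=\{A_i\}_{i\in\mathcal I}\subset\mathrm{SL}(3,\mathbb R)_{>0}$ finite (determinant one, positive entries), generating a semigroup Zariski dense in $\mathrm{SL}(3,\mathbb R)$. For a $3\times3$ matrix $A$ with rows $r_{A,j}$, $\tilde x=(x_1,x_2,1)$ and $\varphi_A(x)=(\langle r_{A,1},\tilde x\rangle/\langle r_{A,3},\tilde x\rangle,\langle r_{A,2},\tilde x\rangle/\langle r_{A,3},\tilde x\rangle)$. $p$ positive probability vector, $\mu$ the compactly supported probability on $\mathbb R^2_{>0}$ with $\mu=\sum_ip_i\varphi_{A_i}\mu$. $\mathbf B$: matrices $B\in\mathrm{Mat}_{2,3}(\mathbb R)$ with rows $r_{B,1},r_{B,2}$ such that $|r_{B,2}|=1$, $r_{B,2}$ has nonnegative coordinates and $r_{B,1},r_{B,2}$ are linearly independent. For $B_1,B_2\in\mathrm{Mat}_{2,3}(\mathbb R)$, $p_{B_1,B_2}(x)=\det\begin{pmatrix}\langle r_{B_1,1},\tilde x\rangle&\langle r_{B_2,1},\tilde x\rangle\\\langle r_{B_1,2},\tilde x\rangle&\langle r_{B_2,2},\tilde x\rangle\end{pmatrix}$ for $x\in\mathbb R^2$. *)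

theory Defs
  imports "HOL-Analysis.Analysis" "HOL-Probability.Probability"
begin

definition tl3 :: "real^2 \<Rightarrow> real^3" where
  "tl3 x = vector [x$1, x$2, 1]"

definition phiA :: "real^3^3 \<Rightarrow> real^2 \<Rightarrow> real^2" where
  "phiA A x = vector [ (A$1 \<bullet> tl3 x) / (A$3 \<bullet> tl3 x), (A$2 \<bullet> tl3 x) / (A$3 \<bullet> tl3 x) ]"

definition pB :: "real^3^2 \<Rightarrow> real^3^2 \<Rightarrow> real^2 \<Rightarrow> real" where
  "pB B1 B2 x = (B1$1 \<bullet> tl3 x) * (B2$2 \<bullet> tl3 x) - (B2$1 \<bullet> tl3 x) * (B1$2 \<bullet> tl3 x)"

definition Bset :: "(real^3^2) set" where
  "Bset = {B. norm (B$2) = 1 \<and> (\<forall>k. B$2$k \<ge> 0) \<and> B$1 \<noteq> B$2 \<and> independent {B$1, B$2}}"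

definition SL3 :: "(real^3^3) set" where
  "SL3 = {M. det M = 1}"

definition SL3pos :: "(real^3^3) set" where
  "SL3pos = {M. det M = 1 \<and> (\<forall>i j. M$i$j > 0)}"

inductive_set semigroup_gen :: "(real^'n^'n) set \<Rightarrow> (real^'n^'n) set" for S where
  gen: "M \<in> S \<Longrightarrow> M \<in> semigroup_gen S"
| mult: "M \<in> semigroup_gen S \<Longrightarrow> N \<in> semigroup_gen S \<Longrightarrow> M ** N \<in> semigroup_gen S"

inductive matrix_poly :: "(real^'n^'m \<Rightarrow> real) \<Rightarrow> bool" where
  const: "matrix_poly (\<lambda>M. c)"
| entry: "matrix_poly (\<lambda>M. M$i$j)"
| add: "matrix_poly f \<Longrightarrow> matrix_poly g \<Longrightarrow> matrix_poly (\<lambda>M. f M + g M)"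
| mult: "matrix_poly f \<Longrightarrow> matrix_poly g \<Longrightarrow> matrix_poly (\<lambda>M. f M * g M)"

definition zariski_dense_SL3 :: "(real^3^3) set \<Rightarrow> bool" where
  "zariski_dense_SL3 S \<longleftrightarrow> S \<subseteq> SL3 \<and>
     (\<forall>f. matrix_poly f \<longrightarrow> (\<forall>M\<in>S. f M = 0) \<longrightarrow> (\<forall>M\<in>SL3. f M = 0))"

end

theory Submission
  imports Defs
begin


definition Qf :: "real^3^2 \<Rightarrow> real^3^2 \<Rightarrow> real^3 \<Rightarrow> real" where
  "Qf B1 B2 v = (B1$1 \<bullet> v) * (B2$2 \<bullet> v) - (B2$1 \<bullet> v) * (B1$2 \<bullet> v)"

lemma pB_Qf: "pB B1 B2 x = Qf B1 B2 (tl3 x)"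
  by (simp add: pB_def Qf_def)

lemma tl3_eq: "tl3 x = (\<chi> i. if i = 1 then x$1 else if i = 2 then x$2 else 1)"
  by (simp add: tl3_def vec_eq_iff forall_3)

lemma cont_tl3: "continuous_on S tl3"
  unfolding tl3_eq
  apply (intro continuous_on_vec_lambda)
  subgoal for i by (cases "i = 1"; cases "i = 2") (auto intro!: continuous_intros continuous_on_component)
  done

lemma cont_Qf: "continuous_on S (Qf B1 B2)"
  unfolding Qf_def by (intro continuous_intros)

lemma Qf_scale: "Qf B1 B2 (c *\<^sub>R v) = c^2 * Qf B1 B2 v"
  by (simp add: Qf_def power2_eq_square algebra_simps)

lemma mp_inner: "matrix_poly (\<lambda>M::real^3^3. u \<bullet> (M *v t))"
proof -
  have e: "(\<lambda>M::real^3^3. u \<bullet> (M *v t)) = (\<lambda>M.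
     u$1 * (M$1$1*t$1 + M$1$2*t$2 + M$1$3*t$3) + u$2 * (M$2$1*t$1 + M$2$2*t$2 + M$2$3*t$3)
   + u$3 * (M$3$1*t$1 + M$3$2*t$2 + M$3$3*t$3))"
    by (simp add: inner_vec_def sum_3 matrix_vector_mult_def)
  show ?thesis unfolding e by (intro matrix_poly.intros)
qed

lemma mp_Qf: "matrix_poly (\<lambda>M::real^3^3. Qf B1 B2 (M *v t))"
proof -
  have e: "(\<lambda>M::real^3^3. Qf B1 B2 (M *v t)) = (\<lambda>M. (B1$1 \<bullet> (M *v t)) * (B2$2 \<bullet> (M *v t))
     + (-1) * ((B2$1 \<bullet> (M *v t)) * (B1$2 \<bullet> (M *v t))))"
    by (simp add: Qf_def)
  show ?thesis unfolding e by (intro matrix_poly.intros mp_inner)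
qed

lemma alg3:
  fixes a1 a2 a3 b1 b2 b3 r1 r2 r3 q1 q2 q3 :: real
  assumes "a1*q1 = r1*b1" "a2*q2 = r2*b2" "a3*q3=r3*b3"
   "a1*q2 + a2*q1 = r1*b2 + r2*b1"
   "a1*q3 + a3*q1 = r1*b3 + r3*b1"
   "a2*q3 + a3*q2 = r2*b3 + r3*b2"
   "a1*b2 - a2*b1 \<noteq> 0"
  shows "\<exists>c. r1 = c*a1 \<and> r2 = c*a2 \<and> r3 = c*a3 \<and> q1 = c*b1 \<and> q2 = c*b2 \<and> q3 = c*b3"
proof -
  let ?m = "a1*b2 - a2*b1" let ?n = "r1*b2 - r2*b1"
  have "r1 * ?m = ?n * a1" "r2 * ?m = ?n * a2" "r3 * ?m = ?n * a3"
       "q1 * ?m = ?n * b1" "q2 * ?m = ?n * b2" "q3 * ?m = ?n * b3"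
    using assms by algebra+
  then show ?thesis using assms(7)
    by (intro exI[of _ "?n / ?m"]) (auto simp: field_simps)
qed

lemma sl3_hit:
  fixes n1 n2 w :: "real^3"
  assumes H: "\<forall>M\<in>SL3. Qf B1 B2 (M *v vector [a, b, 1]) = 0"
    and d: "n1$1 * n2$2 * w$3 + n2$1 * w$2 * n1$3 + w$1 * n1$2 * n2$3
          - n1$1 * w$2 * n2$3 - n2$1 * n1$2 * w$3 - w$1 * n2$2 * n1$3 = 1"
  shows "Qf B1 B2 w = 0"
proof -
  define M :: "real^3^3" where "M = (\<chi> i j. if j = 1 then n1$i else if j = 2 then n2$i
     else w$i - a * n1$i - b * n2$i)"
  have "det M = 1" using d unfolding M_def det_3 by (simp add: algebra_simps)
  hence "M \<in> SL3" by (simp add: SL3_def)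
  moreover have "M *v vector [a, b, 1] = w"
    by (simp add: M_def vec_eq_iff forall_3 matrix_vector_mult_def sum_3 algebra_simps)
  ultimately show ?thesis using H by force
qed

lemma dep3:
  fixes u v :: "real^3"
  assumes "independent {u, v}" "u \<noteq> v"
  shows "u$1* v$2 - u$2* v$1 \<noteq> 0 \<or> u$1* v$3 - u$3* v$1 \<noteq> 0 \<or> u$2* v$3 - u$3* v$2 \<noteq> 0"
proof (rule ccontr)
  assume z: "\<not> ?thesis"
  have v0: "v \<noteq> 0" using assms(1) by (metis dependent_zero insertI1 insert_commute)
  have ns: "u \<notin> span {v}" using assms by (simp add: independent_insert)
  then have nc: "\<And>c. u \<noteq> c *\<^sub>R v" by (metis span_base span_scale singletonI)
  obtain k where k: "v$k \<noteq> 0" using v0 by (metis vec_eq_iff zero_index)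
  have "u = (u$k / v$k) *\<^sub>R v"
    using z k exhaust_3[of k] by (auto simp: vec_eq_iff forall_3 field_simps)
  with nc show False by blast
qed

lemma Qzero_mult:
  assumes H: "\<forall>M\<in>SL3. Qf B1 B2 (M *v vector [a, b, 1]) = 0"
    and ind: "independent {B1$1, B1$2}" "B1$1 \<noteq> B1$2"
  shows "\<exists>c. B2 = c *\<^sub>R B1"
proof -
  have h1: "Qf B1 B2 (vector [1,0,0]) = 0"
    by (rule sl3_hit[OF H, of "vector [0,1,0]" "vector [0,0,1]"]) simp
  have h2: "Qf B1 B2 (vector [0,1,0]) = 0"
    by (rule sl3_hit[OF H, of "vector [0,0,1]" "vector [1,0,0]"]) simp
  have h3: "Qf B1 B2 (vector [0,0,1]) = 0"
    by (rule sl3_hit[OF H, of "vector [1,0,0]" "vector [0,1,0]"]) simp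
  have h12: "Qf B1 B2 (vector [1,1,0]) = 0"
    by (rule sl3_hit[OF H, of "vector [0,1,0]" "vector [0,0,1]"]) simp
  have h13: "Qf B1 B2 (vector [1,0,1]) = 0"
    by (rule sl3_hit[OF H, of "vector [0,1,0]" "vector [0,0,1]"]) simp
  have h23: "Qf B1 B2 (vector [0,1,1]) = 0"
    by (rule sl3_hit[OF H, of "vector [0,0,1]" "vector [1,0,0]"]) simp
  define a1 where "a1 = B1$1$1" define a2 where "a2 = B1$1$2" define a3 where "a3 = B1$1$3"
  define b1 where "b1 = B1$2$1" define b2 where "b2 = B1$2$2" define b3 where "b3 = B1$2$3"
  define r1 where "r1 = B2$1$1" define r2 where "r2 = B2$1$2" define r3 where "r3 = B2$1$3"
  define q1 where "q1 = B2$2$1" define q2 where "q2 = B2$2$2" define q3 where "q3 = B2$2$3"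
  note defs = a1_def a2_def a3_def b1_def b2_def b3_def r1_def r2_def r3_def q1_def q2_def q3_def
  have e1: "a1*q1 = r1*b1" using h1 by (simp add: Qf_def inner_vec_def sum_3 defs)
  have e2: "a2*q2 = r2*b2" using h2 by (simp add: Qf_def inner_vec_def sum_3 defs)
  have e3: "a3*q3 = r3*b3" using h3 by (simp add: Qf_def inner_vec_def sum_3 defs)
  have e12: "a1*q2 + a2*q1 = r1*b2 + r2*b1" using h12 e1 e2 
    by (simp add: Qf_def inner_vec_def sum_3 defs algebra_simps)
  have e13: "a1*q3 + a3*q1 = r1*b3 + r3*b1" using h13 e1 e3
    by (simp add: Qf_def inner_vec_def sum_3 defs algebra_simps)
  have e23: "a2*q3 + a3*q2 = r2*b3 + r3*b2" using h23 e2 e3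
    by (simp add: Qf_def inner_vec_def sum_3 defs algebra_simps)
  have "\<exists>c. r1 = c*a1 \<and> r2 = c*a2 \<and> r3 = c*a3 \<and> q1 = c*b1 \<and> q2 = c*b2 \<and> q3 = c*b3"
  proof -
    have "a1*b2 - a2*b1 \<noteq> 0 \<or> a1*b3 - a3*b1 \<noteq> 0 \<or> a2*b3 - a3*b2 \<noteq> 0"
      using dep3[OF ind] by (simp add: defs)
    moreover have ?thesis if "a1*b2 - a2*b1 \<noteq> 0"
      using alg3[of a1 q1 r1 b1 a2 q2 r2 b2 a3 q3 r3 b3] e1 e2 e3 e12 e13 e23 that
      by (auto simp: algebra_simps)
    moreover have ?thesis if "a1*b3 - a3*b1 \<noteq> 0"
      using alg3[of a1 q1 r1 b1 a3 q3 r3 b3 a2 q2 r2 b2] e1 e2 e3 e12 e13 e23 that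
      by (auto simp: algebra_simps)
    moreover have ?thesis if "a2*b3 - a3*b2 \<noteq> 0"
      using alg3[of a2 q2 r2 b2 a3 q3 r3 b3 a1 q1 r1 b1] e1 e2 e3 e12 e13 e23 that
      by (auto simp: algebra_simps)
    ultimately show ?thesis by blast
  qed
  then obtain c where "r1 = c*a1 \<and> r2 = c*a2 \<and> r3 = c*a3 \<and> q1 = c*b1 \<and> q2 = c*b2 \<and> q3 = c*b3" by blast
  then have "B2 = c *\<^sub>R B1" by (simp add: defs vec_eq_iff forall_2 forall_3)
  then show ?thesis by blast
qed



lemma sum_eq1:
  fixes p f :: "'i \<Rightarrow> real"
  assumes fin: "finite I" and pp: "\<forall>i\<in>I. p i > 0" and ps: "sum p I = 1" and fl: "\<forall>i\<in>I. f i \<le> 1"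
    and s1: "(\<Sum>i\<in>I. p i * f i) = 1" and i: "i \<in> I"
  shows "f i = 1"
proof -
  have e: "(\<Sum>i\<in>I. p i * (1 - f i)) = sum p I - (\<Sum>i\<in>I. p i * f i)"
    unfolding sum_subtractf[symmetric] by (rule sum.cong) (auto simp: right_diff_distrib)
  have z: "(\<Sum>i\<in>I. p i * (1 - f i)) = 0" using e ps s1 by linarith
  have nn: "\<And>j. j \<in> I \<Longrightarrow> p j * (1 - f j) \<ge> 0"
  proof -
    fix j assume j: "j \<in> I"
    have "p j \<ge> 0" using pp j by (meson less_imp_le)
    moreover have "1 - f j \<ge> 0" using fl j by simp
    ultimately show "p j * (1 - f j) \<ge> 0" by (rule mult_nonneg_nonneg)
  qed
  have eq: "(\<Sum>i\<in>I. p i * (1 - f i)) = 0 \<longleftrightarrow> (\<forall>x\<in>I. p x * (1 - f x) = 0)"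
    by (rule sum_nonneg_eq_0_iff[OF fin nn])
  have "\<forall>x\<in>I. p x * (1 - f x) = 0" using iffD1[OF eq z] .
  then have "p i * (1 - f i) = 0" using i by blast
  moreover have "p i \<noteq> 0" using pp i by force
  ultimately show ?thesis by simp
qed

lemma (in prob_space) int1:
  assumes "A \<in> events" "B \<in> events" "prob A = 1" "prob B = 1"
  shows "prob (A \<inter> B) = 1"
proof -
  have e: "space M - (A \<inter> B) = (space M - A) \<union> (space M - B)" by blast
  have "prob (space M - (A \<inter> B)) \<le> prob (space M - A) + prob (space M - B)"
    unfolding e using assms by (intro measure_Un_le) auto
  also have "\<dots> = 0" using assms by (simp add: prob_compl)
  finally have "prob (space M - (A \<inter> B)) \<le> 0" .
  moreover have "A \<inter> B \<in> events" using assms by auto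
  ultimately show ?thesis using prob_compl[of "A \<inter> B"] prob_le_1[of "A \<inter> B"] by linarith
qed

lemma sg_ind:
  assumes "M \<in> semigroup_gen S"
    and gen: "\<And>M R. M \<in> S \<Longrightarrow> closed R \<Longrightarrow> (\<forall>c v. c > 0 \<longrightarrow> v \<in> R \<longrightarrow> c *\<^sub>R v \<in> R)
       \<Longrightarrow> measure \<mu> (tl3 -` R) = 1 \<Longrightarrow> measure \<mu> ((\<lambda>x. M *v tl3 x) -` R) = 1"
  shows "\<forall>R. closed R \<longrightarrow> (\<forall>c v. c > 0 \<longrightarrow> v \<in> R \<longrightarrow> c *\<^sub>R v \<in> R)
       \<longrightarrow> measure \<mu> (tl3 -` R) = 1 \<longrightarrow> measure \<mu> ((\<lambda>x. M *v tl3 x) -` R) = 1"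
  using assms(1)
proof (induction)
  case (gen M)
  then show ?case using assms(2) by blast
next
  case (mult M N)
  show ?case
  proof (intro allI impI)
    fix R :: "(real^3) set"
    assume R: "closed R" "\<forall>c v. c > 0 \<longrightarrow> v \<in> R \<longrightarrow> c *\<^sub>R v \<in> R" and m: "measure \<mu> (tl3 -` R) = 1"
    let ?R' = "((*v) M) -` R"
    have c': "closed ?R'" using R(1) by (intro closed_vimage matrix_vector_mult_linear_continuous_on)
    have k': "\<forall>c v. c > 0 \<longrightarrow> v \<in> ?R' \<longrightarrow> c *\<^sub>R v \<in> ?R'"
      using R(2) by (simp add: matrix_vector_mult_scaleR)
    have "measure \<mu> ((\<lambda>x. M *v tl3 x) -` R) = 1" using mult.IH(1) R m by blast
    then have "measure \<mu> (tl3 -` ?R') = 1" by (simp add: vimage_def)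
    then have "measure \<mu> ((\<lambda>x. N *v tl3 x) -` ?R') = 1" using mult.IH(2) c' k' by blast
    then show "measure \<mu> ((\<lambda>x. (M ** N) *v tl3 x) -` R) = 1"
      by (simp add: vimage_def matrix_vector_mul_assoc)
  qed
qed



theorem lemma4p10:
  fixes I :: "'i set" and A :: "'i \<Rightarrow> real^3^3" and p :: "'i \<Rightarrow> real"
    and \<mu> :: "(real^2) measure" and B1 B2 :: "real^3^2"
  assumes finI: "finite I"
    and A_pos: "A ` I \<subseteq> SL3pos"
    and zd: "zariski_dense_SL3 (semigroup_gen (A ` I))"
    and p_pos: "\<forall>i\<in>I. p i > 0" and p_sum: "(\<Sum>i\<in>I. p i) = 1"
    and mu_prob: "prob_space \<mu>" and mu_sets: "sets \<mu> = sets borel"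
    and mu_supp: "\<exists>K. compact K \<and> K \<subseteq> {x. \<forall>k. x$k > 0} \<and> measure \<mu> K = 1"
    and mu_stat: "\<forall>S\<in>sets borel. measure \<mu> S =
                    (\<Sum>i\<in>I. p i * measure \<mu> (phiA (A i) -` S \<inter> space \<mu>))"
    and B1_in: "B1 \<in> Bset"
    and B2_notin: "\<not> (\<exists>c::real. B2 = c *\<^sub>R B1)"
  shows "measure \<mu> {x. pB B1 B2 x \<noteq> 0} > 0"
proof (rule ccontr)
  assume neg: "\<not> ?thesis"
  interpret P: prob_space \<mu> by (rule mu_prob)
  have sp: "space \<mu> = UNIV" using sets_eq_imp_space_eq[OF mu_sets] by simp
  have clsets: "\<And>C. closed C \<Longrightarrow> C \<in> sets \<mu>" using mu_sets by simp
  obtain K where K: "compact K" "K \<subseteq> {x. \<forall>k. x$k > 0}" "measure \<mu> K = 1" using mu_supp by blast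
  have Ksets: "K \<in> sets \<mu>" using K(1) compact_imp_closed clsets by blast
  have gen: "measure \<mu> ((\<lambda>x. M *v tl3 x) -` R) = 1"
    if M: "M \<in> A ` I" and Rc: "closed R" and Rk: "\<forall>c v. c > 0 \<longrightarrow> v \<in> R \<longrightarrow> c *\<^sub>R v \<in> R"
      and m1: "measure \<mu> (tl3 -` R) = 1" for M R
  proof -
    obtain i where i: "i \<in> I" "M = A i" using M by blast
    let ?S = "tl3 -` R"
    have Sb: "?S \<in> sets borel" using closed_vimage[OF Rc cont_tl3] by simp
    have st: "1 = (\<Sum>j\<in>I. p j * measure \<mu> (phiA (A j) -` ?S))"
      using mu_stat Sb m1 sp by simp
    have T1: "measure \<mu> (phiA (A i) -` ?S) = 1"
      by (rule sum_eq1[OF finI p_pos p_sum _ st[symmetric] i(1)]) (simp add: P.prob_le_1)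
    have Tsets: "phiA (A i) -` ?S \<in> sets \<mu>" using T1 measure_notin_sets by force
    have TK: "measure \<mu> (phiA (A i) -` ?S \<inter> K) = 1"
      using P.int1[OF Tsets Ksets T1 K(3)] .
    have Cl: "(\<lambda>x. M *v tl3 x) -` R \<in> sets \<mu>"
      by (intro clsets closed_vimage[OF Rc] continuous_on_compose2[OF matrix_vector_mult_linear_continuous_on cont_tl3]) auto
    have Mpos: "\<forall>a b. M$a$b > 0" using A_pos i unfolding SL3pos_def by blast
    have sub: "phiA (A i) -` ?S \<inter> K \<subseteq> (\<lambda>x. M *v tl3 x) -` R"
    proof
      fix x assume x: "x \<in> phiA (A i) -` ?S \<inter> K"
      have xp: "x$1 > 0" "x$2 > 0" using x K(2) by auto
      let ?t = "tl3 x"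
      define d where "d = M$3 \<bullet> ?t"
      have dpos: "d > 0" unfolding d_def using xp Mpos
        by (simp add: tl3_def inner_vec_def sum_3 add_pos_pos)
      have "tl3 (phiA M x) \<in> R" using x i by simp
      then have "d *\<^sub>R tl3 (phiA M x) \<in> R" using Rk dpos by blast
      moreover have "d *\<^sub>R tl3 (phiA M x) = M *v ?t"
        using dpos by (simp add: vec_eq_iff forall_3 matrix_vector_mul_component phiA_def d_def
          del: vector_3) (simp add: tl3_def)
      ultimately show "x \<in> (\<lambda>x. M *v tl3 x) -` R" by simp
    qed
    have "1 \<le> measure \<mu> ((\<lambda>x. M *v tl3 x) -` R)"
      using P.finite_measure_mono[OF sub Cl] TK by simp
    then show ?thesis using P.prob_le_1 by (simp add: antisym)
  qed
  have IH: "\<forall>R. closed R \<longrightarrow> (\<forall>c v. c > 0 \<longrightarrow> v \<in> R \<longrightarrow> c *\<^sub>R v \<in> R)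
       \<longrightarrow> measure \<mu> (tl3 -` R) = 1 \<longrightarrow> measure \<mu> ((\<lambda>x. M *v tl3 x) -` R) = 1"
    if "M \<in> semigroup_gen (A ` I)" for M
    by (rule sg_ind[OF that gen]) auto
  let ?R0 = "Qf B1 B2 -` {0}"
  have R0c: "closed ?R0" by (intro closed_vimage cont_Qf) simp
  have R0k: "\<forall>c v. c > 0 \<longrightarrow> v \<in> ?R0 \<longrightarrow> c *\<^sub>R v \<in> ?R0" by (simp add: Qf_scale)
  have pe: "{x. pB B1 B2 x \<noteq> 0} = UNIV - tl3 -` ?R0" by (auto simp: pB_Qf)
  have ps: "tl3 -` ?R0 \<in> sets \<mu>" using closed_vimage[OF R0c cont_tl3] clsets by blast
  have m0: "measure \<mu> {x. pB B1 B2 x \<noteq> 0} = 0" using neg measure_nonneg[of \<mu>] by (meson not_less order_antisym)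
  have m1: "measure \<mu> (tl3 -` ?R0) = 1"
    using P.prob_compl[OF ps] m0 pe sp by simp
  have allM: "measure \<mu> ((\<lambda>x. M *v tl3 x) -` ?R0) = 1" if "M \<in> semigroup_gen (A ` I)" for M
    using IH[OF that] R0c R0k m1 by blast
  define U where "U M = UNIV - (\<lambda>x. M *v tl3 x) -` ?R0" for M
  have Uopen: "open (U M)" for M
  proof -
    have "closed ((\<lambda>x. M *v tl3 x) -` ?R0)"
      by (intro closed_vimage[OF R0c] continuous_on_compose2[OF matrix_vector_mult_linear_continuous_on cont_tl3]) auto
    then show ?thesis unfolding U_def by (simp add: open_Diff)
  qed
  have Unull: "U M \<in> null_sets \<mu>" if "M \<in> semigroup_gen (A ` I)" for M
  proof -
    have cs: "(\<lambda>x. M *v tl3 x) -` ?R0 \<in> sets \<mu>"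
      by (intro clsets closed_vimage[OF R0c] continuous_on_compose2[OF matrix_vector_mult_linear_continuous_on cont_tl3]) auto
    have "measure \<mu> (U M) = 0" unfolding U_def using P.prob_compl[OF cs] allM[OF that] sp by simp
    moreover have "U M \<in> sets \<mu>" unfolding U_def using sets.compl_sets[OF cs] sp by simp
    ultimately show ?thesis by (simp add: P.emeasure_eq_measure null_setsI)
  qed
  obtain F' where F': "F' \<subseteq> U ` semigroup_gen (A ` I)" "countable F'" "\<Union>F' = \<Union>(U ` semigroup_gen (A ` I))"
    using Lindelof[of "U ` semigroup_gen (A ` I)"] Uopen by blast
  have "\<Union>F' \<in> null_sets \<mu>"
  proof -
    have "(\<Union>X\<in>F'. X) \<in> null_sets \<mu>" using F'(1,2) Unull by (intro null_sets_UN') auto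
    then show ?thesis by simp
  qed
  then have "measure \<mu> (\<Union>(U ` semigroup_gen (A ` I))) = 0" using F'(3) by (simp add: measure_eq_0_null_sets)
  moreover have "measure \<mu> (UNIV :: (real^2) set) = 1" using P.prob_space sp by simp
  ultimately have "\<Union>(U ` semigroup_gen (A ` I)) \<noteq> UNIV" by auto
  then obtain x0 where x0: "x0 \<notin> \<Union>(U ` semigroup_gen (A ` I))" by blast
  have van: "\<forall>M\<in>semigroup_gen (A ` I). Qf B1 B2 (M *v tl3 x0) = 0"
    using x0 unfolding U_def by auto
  have "\<forall>M\<in>SL3. Qf B1 B2 (M *v tl3 x0) = 0"
    using zd mp_Qf[of B1 B2 "tl3 x0"] van unfolding zariski_dense_SL3_def by blast
  then have "\<forall>M\<in>SL3. Qf B1 B2 (M *v vector [x0$1, x0$2, 1]) = 0" by (simp add: tl3_def)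
  moreover have "independent {B1$1, B1$2}" "B1$1 \<noteq> B1$2" using B1_in by (auto simp: Bset_def)
  ultimately have "\<exists>c. B2 = c *\<^sub>R B1" by (rule Qzero_mult)
  then show False using B2_notin by blast
qed

end
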